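(* Let $S$ be a finite alphabet, $X = S^{\mathbb{Z}}$ the full shift, and $f : X \to X$ a cellular automaton. Then the language of the nonwandering set $\mathcal{N}(f)$ is a $\Sigma^1_1$ set.
   Context: A cellular automaton on $X = S^{\mathbb{Z}}$ (product topology) is a continuous shift-commuting map $f: X \to X$. The nonwandering set of $f$ is $\mathcal{N}(f) = \{x \in X \mid x \in \bigcap_{n \in \mathbb{N}} \overline{\bigcup_{k \geq n} \{f^k(x)\}}\}$, i.e. the set of configurations that are limit points of their own orbit. The language of $Y \subseteq S^{\mathbb{Z}}$ is the set of words $w \in S^*$ with $w = y_{[0,k-1]}$ for some $y\in Y$, $k \in \mathbb{N}$, viewed as a subset of $\mathbb{N}$ via a computable bijection. A set $P \subseteq \mathbb{N}$ is $\Sigma^1_1$ if $w \in P \iff (\exists C \subseteq \mathbb{N})(\forall m \in \mathbb{N})(\exists \ell \in \mathbb{N}) R(C,m,\ell,w)$ for some recursive predicate $R$. *)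

theory Defs
  imports "HOL-Analysis.Analysis" "HOL-Library.Nat_Bijection"
begin

text \<open>Configurations are maps int => nat; the full shift over the finite alphabet
  S = {0..<k} is the set below, carrying the subspace topology of the product
  topology on int => nat (nat discrete).\<close>

definition full_shift :: "nat \<Rightarrow> (int \<Rightarrow> nat) set" where
  "full_shift k = {x. \<forall>i. x i < k}"

definition shift :: "(int \<Rightarrow> nat) \<Rightarrow> (int \<Rightarrow> nat)" where
  "shift x = (\<lambda>i. x (i + 1))"

definition cellular_automaton :: "nat \<Rightarrow> ((int \<Rightarrow> nat) \<Rightarrow> (int \<Rightarrow> nat)) \<Rightarrow> bool" where
  "cellular_automaton k f \<longleftrightarrow>
     f ` full_shift k \<subseteq> full_shift k \<and>
     continuous_on (full_shift k) f \<and>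
     (\<forall>x \<in> full_shift k. f (shift x) = shift (f x))"

definition nonwandering :: "nat \<Rightarrow> ((int \<Rightarrow> nat) \<Rightarrow> (int \<Rightarrow> nat)) \<Rightarrow> (int \<Rightarrow> nat) set" where
  "nonwandering k f =
     {x \<in> full_shift k. \<forall>n. x \<in> closure ((\<lambda>j. (f ^^ j) x) ` {n..})}"

definition language :: "(int \<Rightarrow> nat) set \<Rightarrow> nat list set" where
  "language Y = {w. \<exists>y\<in>Y. \<exists>m. w = map (\<lambda>i. y (int i)) [0..<m]}"

text \<open>Words are viewed as natural numbers via the computable bijection list_encode.\<close>
definition language_code :: "(int \<Rightarrow> nat) set \<Rightarrow> nat set" where
  "language_code Y = list_encode ` language Y"

datatype recf = Zr | Sc | Proj nat | Comp recf "recf list" | Prec recf recf | Mn recf | Orc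

inductive rec_eval :: "nat set \<Rightarrow> recf \<Rightarrow> nat list \<Rightarrow> nat \<Rightarrow> bool" for C where
  zero: "rec_eval C Zr xs 0"
| succ: "rec_eval C Sc (x # xs) (Suc x)"
| proj: "i < length xs \<Longrightarrow> rec_eval C (Proj i) xs (xs ! i)"
| comp: "list_all2 (\<lambda>g y. rec_eval C g xs y) gs ys \<Longrightarrow> rec_eval C f ys z
          \<Longrightarrow> rec_eval C (Comp f gs) xs z"
| prec0: "rec_eval C f xs z \<Longrightarrow> rec_eval C (Prec f g) (0 # xs) z"
| precS: "rec_eval C (Prec f g) (n # xs) z \<Longrightarrow> rec_eval C g (z # n # xs) y
          \<Longrightarrow> rec_eval C (Prec f g) (Suc n # xs) y"
| mn: "rec_eval C f (n # xs) 0 \<Longrightarrow> (\<forall>i<n. \<exists>y. 0 < y \<and> rec_eval C f (i # xs) y)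
          \<Longrightarrow> rec_eval C (Mn f) xs n"
| orc: "rec_eval C Orc (x # xs) (if x \<in> C then 1 else 0)"

definition recursive_pred :: "(nat set \<Rightarrow> nat \<Rightarrow> nat \<Rightarrow> nat \<Rightarrow> bool) \<Rightarrow> bool" where
  "recursive_pred R \<longleftrightarrow> (\<exists>r. \<forall>C m l w.
      (R C m l w \<longrightarrow> rec_eval C r [m, l, w] 0) \<and>
      (\<not> R C m l w \<longrightarrow> rec_eval C r [m, l, w] 1))"

definition sigma11 :: "nat set \<Rightarrow> bool" where
  "sigma11 P \<longleftrightarrow> (\<exists>R. recursive_pred R \<and>
      (\<forall>w. w \<in> P \<longleftrightarrow> (\<exists>C. \<forall>m. \<exists>l. R C m l w)))"

end

theory Submission
  imports Defs
begin


section \<open>Program library\<close>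

definition ev :: "nat \<Rightarrow> recf \<Rightarrow> (nat set \<Rightarrow> nat list \<Rightarrow> nat) \<Rightarrow> bool" where
  "ev n r g \<longleftrightarrow> (\<forall>C xs. length xs = n \<longrightarrow> rec_eval C r xs (g C xs))"

lemma evD: "ev n r g \<Longrightarrow> length xs = n \<Longrightarrow> rec_eval C r xs (g C xs)"
  by (simp add: ev_def)

lemma ev_zero: "ev n Zr (\<lambda>_ _. 0)"
  by (simp add: ev_def rec_eval.zero)

lemma ev_proj: "i < n \<Longrightarrow> ev n (Proj i) (\<lambda>C xs. xs ! i)"
  by (simp add: ev_def rec_eval.proj)

lemma ev_comp1: "ev n a ga \<Longrightarrow> ev 1 h gh \<Longrightarrow> ev n (Comp h [a]) (\<lambda>C xs. gh C [ga C xs])"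
  unfolding ev_def by (auto intro!: rec_eval.comp[where ys="[_]"])

lemma ev_comp2: "ev n a ga \<Longrightarrow> ev n b gb \<Longrightarrow> ev 2 h gh \<Longrightarrow>
   ev n (Comp h [a, b]) (\<lambda>C xs. gh C [ga C xs, gb C xs])"
  unfolding ev_def by (auto intro!: rec_eval.comp[where ys="[_,_]"])

lemma ev_sc: "ev 1 Sc (\<lambda>C xs. Suc (xs ! 0))"
  unfolding ev_def
  by (metis One_nat_def length_0_conv length_Suc_conv nth_Cons_0 rec_eval.succ)

lemma ev_orc: "ev 1 Orc (\<lambda>C xs. if xs ! 0 \<in> C then 1 else 0)"
  unfolding ev_def
  by (metis One_nat_def length_0_conv length_Suc_conv nth_Cons_0 rec_eval.orc)

primrec constp :: "nat \<Rightarrow> recf" where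
  "constp 0 = Zr"
| "constp (Suc c) = Comp Sc [constp c]"

lemma ev_const: "ev n (constp c) (\<lambda>_ _. c)"
proof (induction c)
  case 0 then show ?case by (simp add: ev_zero)
next
  case (Suc c)
  from ev_comp1[OF Suc ev_sc] show ?case by simp
qed

definition addp :: recf where "addp = Prec (Proj 0) (Comp Sc [Proj 0])"

lemma len2: "length xs = 2 \<Longrightarrow> \<exists>a b. xs = [a, b]"
  by (cases xs; cases "tl xs"; auto)

lemma len1: "length xs = 1 \<Longrightarrow> \<exists>a. xs = [a]"
  by (cases xs; auto)

lemma addp_eval: "rec_eval C addp [n, x] (n + x)"
proof (induction n)
  case 0
  have "rec_eval C (Proj 0) [x] x" using rec_eval.proj[of 0 "[x]" C] by simp
  then show ?case unfolding addp_def using rec_eval.prec0 by fastforce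
next
  case (Suc n)
  have "rec_eval C (Comp Sc [Proj 0]) [n + x, n, x] (Suc (n + x))"
    using evD[OF ev_comp1[OF ev_proj[of 0 3] ev_sc], of "[n+x,n,x]" C] by simp
  then show ?case using rec_eval.precS[OF Suc[unfolded addp_def]] unfolding addp_def by simp
qed

lemma ev_addp: "ev 2 addp (\<lambda>C xs. xs!0 + xs!1)"
  unfolding ev_def using len2 addp_eval by fastforce

definition multp :: recf where "multp = Prec Zr (Comp addp [Proj 0, Proj 2])"

lemma multp_eval: "rec_eval C multp [n, x] (n * x)"
proof (induction n)
  case 0 then show ?case unfolding multp_def
    by (simp add: rec_eval.prec0 rec_eval.zero)
next
  case (Suc n)
  have "rec_eval C (Comp addp [Proj 0, Proj 2]) [n * x, n, x] (n * x + x)"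
    using evD[OF ev_comp2[OF ev_proj[of 0 3] ev_proj[of 2 3] ev_addp], of "[n*x,n,x]" C] by simp
  then show ?case using rec_eval.precS[OF Suc[unfolded multp_def]] unfolding multp_def by (simp add: add.commute)
qed

lemma ev_multp: "ev 2 multp (\<lambda>C xs. xs!0 * xs!1)"
  unfolding ev_def using len2 multp_eval by fastforce

definition predp :: recf where "predp = Prec Zr (Proj 1)"

lemma predp_eval: "rec_eval C predp [n] (n - 1)"
proof (induction n)
  case 0 then show ?case unfolding predp_def by (simp add: rec_eval.prec0 rec_eval.zero)
next
  case (Suc n)
  have "rec_eval C (Proj 1) [n - 1, n] n" using rec_eval.proj[of 1 "[n-1,n]" C] by simp
  then show ?case using rec_eval.precS[OF Suc[unfolded predp_def]] unfolding predp_def by simp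
qed

lemma ev_predp: "ev 1 predp (\<lambda>C xs. xs!0 - 1)"
  unfolding ev_def using len1 predp_eval by fastforce

definition msubp :: recf where "msubp = Prec (Proj 0) (Comp predp [Proj 0])"

lemma msubp_eval: "rec_eval C msubp [n, x] (x - n)"
proof (induction n)
  case 0
  have "rec_eval C (Proj 0) [x] x" using rec_eval.proj[of 0 "[x]" C] by simp
  then show ?case unfolding msubp_def using rec_eval.prec0 by fastforce
next
  case (Suc n)
  have "rec_eval C (Comp predp [Proj 0]) [x - n, n, x] (x - n - 1)"
    using evD[OF ev_comp1[OF ev_proj[of 0 3] ev_predp], of "[x-n,n,x]" C] by simp
  then show ?case using rec_eval.precS[OF Suc[unfolded msubp_def]] unfolding msubp_def by simp
qed

lemma ev_msubp: "ev 2 msubp (\<lambda>C xs. xs!1 - xs!0)"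
  unfolding ev_def using len2 msubp_eval by fastforce

definition trip :: recf where "trip = Prec Zr (Comp addp [Proj 0, Comp Sc [Proj 1]])"

lemma trip_eval: "rec_eval C trip [n] (triangle n)"
proof (induction n)
  case 0 then show ?case unfolding trip_def
    by (simp add: rec_eval.prec0 rec_eval.zero)
next
  case (Suc n)
  have "rec_eval C (Comp addp [Proj 0, Comp Sc [Proj 1]]) [triangle n, n] (triangle n + Suc n)"
    using evD[OF ev_comp2[OF ev_proj[of 0 2] ev_comp1[OF ev_proj[of 1 2] ev_sc] ev_addp], of "[triangle n,n]" C] by simp
  then show ?case using rec_eval.precS[OF Suc[unfolded trip_def]] unfolding trip_def by simp
qed

lemma ev_trip: "ev 1 trip (\<lambda>C xs. triangle (xs!0))"
  unfolding ev_def using len1 trip_eval by fastforce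


definition Add :: "recf \<Rightarrow> recf \<Rightarrow> recf" where "Add a b = Comp addp [a, b]"
definition Mul :: "recf \<Rightarrow> recf \<Rightarrow> recf" where "Mul a b = Comp multp [a, b]"
definition Sub :: "recf \<Rightarrow> recf \<Rightarrow> recf" where "Sub a b = Comp msubp [b, a]"
definition Tri :: "recf \<Rightarrow> recf" where "Tri a = Comp trip [a]"
definition Suc1 :: "recf \<Rightarrow> recf" where "Suc1 a = Comp Sc [a]"
definition Sg :: "recf \<Rightarrow> recf" where "Sg a = Sub (constp 1) (Sub (constp 1) a)"

lemma ev_Add: "ev n a ga \<Longrightarrow> ev n b gb \<Longrightarrow> ev n (Add a b) (\<lambda>C xs. ga C xs + gb C xs)"
  unfolding Add_def using ev_comp2[OF _ _ ev_addp] by fastforce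
lemma ev_Mul: "ev n a ga \<Longrightarrow> ev n b gb \<Longrightarrow> ev n (Mul a b) (\<lambda>C xs. ga C xs * gb C xs)"
  unfolding Mul_def using ev_comp2[OF _ _ ev_multp] by fastforce
lemma ev_Sub: "ev n a ga \<Longrightarrow> ev n b gb \<Longrightarrow> ev n (Sub a b) (\<lambda>C xs. ga C xs - gb C xs)"
  unfolding Sub_def using ev_comp2[OF _ _ ev_msubp] by fastforce
lemma ev_Tri: "ev n a ga \<Longrightarrow> ev n (Tri a) (\<lambda>C xs. triangle (ga C xs))"
  unfolding Tri_def using ev_comp1[OF _ ev_trip] by fastforce
lemma ev_Suc1: "ev n a ga \<Longrightarrow> ev n (Suc1 a) (\<lambda>C xs. Suc (ga C xs))"
  unfolding Suc1_def using ev_comp1[OF _ ev_sc] by fastforce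
lemma ev_Sg: "ev n a ga \<Longrightarrow> ev n (Sg a) (\<lambda>C xs. if ga C xs = 0 then 0 else 1)"
proof -
  assume a: "ev n a ga"
  have "ev n (Sg a) (\<lambda>C xs. 1 - (1 - ga C xs))"
    unfolding Sg_def by (intro ev_Sub ev_const a)
  moreover have "(\<lambda>C xs. 1 - (1 - ga C xs)) = (\<lambda>C xs. if ga C xs = 0 then 0 else (1::nat))"
    by (auto simp: fun_eq_iff)
  ultimately show ?thesis by simp
qed
lemma ev_Mem: "ev n a ga \<Longrightarrow> ev n (Comp Orc [a]) (\<lambda>C xs. if ga C xs \<in> C then 1 else 0)"
  using ev_comp1[OF _ ev_orc] by fastforce

lemma ev_cong: "ev n r g \<Longrightarrow> (\<And>C xs. length xs = n \<Longrightarrow> g C xs = g' C xs) \<Longrightarrow> ev n r g'"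
  unfolding ev_def by auto

definition dec :: "nat \<Rightarrow> recf \<Rightarrow> (nat set \<Rightarrow> nat list \<Rightarrow> bool) \<Rightarrow> bool" where
  "dec n r P \<longleftrightarrow> ev n r (\<lambda>C xs. if P C xs then 0 else 1)"

definition AND :: "recf \<Rightarrow> recf \<Rightarrow> recf" where "AND a b = Sg (Add a b)"
definition OR :: "recf \<Rightarrow> recf \<Rightarrow> recf" where "OR a b = Mul a b"
definition NOT :: "recf \<Rightarrow> recf" where "NOT a = Sub (constp 1) a"
definition IMP :: "recf \<Rightarrow> recf \<Rightarrow> recf" where "IMP a b = OR (NOT a) b"
definition EQ :: "recf \<Rightarrow> recf \<Rightarrow> recf" where "EQ a b = Sg (Add (Sub a b) (Sub b a))"
definition LE :: "recf \<Rightarrow> recf \<Rightarrow> recf" where "LE a b = Sg (Sub a b)"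
definition MEM :: "recf \<Rightarrow> recf" where "MEM a = NOT (Comp Orc [a])"

lemma dec_AND: "dec n a P \<Longrightarrow> dec n b Q \<Longrightarrow> dec n (AND a b) (\<lambda>C xs. P C xs \<and> Q C xs)"
  unfolding dec_def AND_def by (rule ev_cong[OF ev_Sg[OF ev_Add]]) (auto split: if_splits)
lemma dec_OR: "dec n a P \<Longrightarrow> dec n b Q \<Longrightarrow> dec n (OR a b) (\<lambda>C xs. P C xs \<or> Q C xs)"
  unfolding dec_def OR_def by (rule ev_cong[OF ev_Mul]) auto
lemma dec_NOT: "dec n a P \<Longrightarrow> dec n (NOT a) (\<lambda>C xs. \<not> P C xs)"
  unfolding dec_def NOT_def by (rule ev_cong[OF ev_Sub[OF ev_const]]) auto
lemma dec_IMP: "dec n a P \<Longrightarrow> dec n b Q \<Longrightarrow> dec n (IMP a b) (\<lambda>C xs. P C xs \<longrightarrow> Q C xs)"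
  unfolding IMP_def using dec_OR[OF dec_NOT] by fastforce
lemma dec_EQ: "ev n a ga \<Longrightarrow> ev n b gb \<Longrightarrow> dec n (EQ a b) (\<lambda>C xs. ga C xs = gb C xs)"
  unfolding dec_def EQ_def by (rule ev_cong[OF ev_Sg[OF ev_Add[OF ev_Sub ev_Sub]]]) auto
lemma dec_LE: "ev n a ga \<Longrightarrow> ev n b gb \<Longrightarrow> dec n (LE a b) (\<lambda>C xs. ga C xs \<le> gb C xs)"
  unfolding dec_def LE_def by (rule ev_cong[OF ev_Sg[OF ev_Sub]]) auto
lemma dec_MEM: "ev n a ga \<Longrightarrow> dec n (MEM a) (\<lambda>C xs. ga C xs \<in> C)"
  unfolding dec_def MEM_def NOT_def by (rule ev_cong[OF ev_Sub[OF ev_const ev_Mem]]) auto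
lemma dec_TRUE: "dec n (constp 0) (\<lambda>C xs. True)"
  unfolding dec_def by (rule ev_cong[OF ev_const]) auto

section \<open>Unpairing\<close>

definition unpf :: recf where "unpf = LE (Suc1 (Proj 1)) (Tri (Suc1 (Proj 0)))"

lemma dec_unpf: "dec 2 unpf (\<lambda>C xs. xs!1 < triangle (Suc (xs!0)))"
  unfolding unpf_def
  by (rule dec_LE[OF ev_Suc1[OF ev_proj] ev_Tri[OF ev_Suc1[OF ev_proj]], simplified Suc_le_eq]) auto

lemma triangle_ge: "m < triangle (Suc m)"
  by (induction m) auto

lemma ev_unp: "ev 1 (Mn unpf) (\<lambda>C xs. LEAST t. xs!0 < triangle (Suc t))"
  unfolding ev_def
proof (intro allI impI)
  fix C :: "nat set" and xs :: "nat list"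
  assume "length xs = 1"
  then obtain m where xs: "xs = [m]" using len1 by blast
  let ?s = "LEAST t. m < triangle (Suc t)"
  have ex: "m < triangle (Suc ?s)" by (rule LeastI[of _ m]) (rule triangle_ge)
  have d: "rec_eval C unpf [t, m] (if m < triangle (Suc t) then 0 else 1)" for t
    using evD[OF dec_unpf[unfolded dec_def], of "[t, m]"] by simp
  have "rec_eval C (Mn unpf) [m] ?s"
  proof (rule rec_eval.mn)
    show "rec_eval C unpf (?s # [m]) 0" using d[of ?s] ex by simp
    show "\<forall>i<?s. \<exists>y. 0 < y \<and> rec_eval C unpf (i # [m]) y"
    proof (intro allI impI)
      fix i assume "i < ?s"
      then have "\<not> m < triangle (Suc i)" by (rule not_less_Least)
      then show "\<exists>y. 0 < y \<and> rec_eval C unpf (i # [m]) y" using d[of i] by (intro exI[of _ 1]) simp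
    qed
  qed
  then show "rec_eval C (Mn unpf) xs (LEAST t. xs ! 0 < triangle (Suc t))" using xs by simp
qed

lemma prod_decode_least:
  "prod_decode m = (m - triangle (LEAST t. m < triangle (Suc t)),
      (LEAST t. m < triangle (Suc t)) - (m - triangle (LEAST t. m < triangle (Suc t))))"
proof -
  define s where "s = (LEAST t. m < triangle (Suc t))"
  have ex: "m < triangle (Suc s)" unfolding s_def by (rule LeastI[of _ m]) (rule triangle_ge)
  have ge: "triangle s \<le> m"
  proof (cases s)
    case 0 then show ?thesis by simp
  next
    case (Suc q)
    have "\<not> m < triangle (Suc q)" using not_less_Least[of q "\<lambda>t. m < triangle (Suc t)"] Suc s_def by simp
    then show ?thesis using Suc by simp
  qed
  have le: "m - triangle s \<le> s" using ex ge by simp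
  have "prod_encode (m - triangle s, s - (m - triangle s)) = m"
    unfolding prod_encode_def using le ge by simp
  then have "prod_decode m = (m - triangle s, s - (m - triangle s))"
    by (metis prod_encode_inverse)
  then show ?thesis unfolding s_def .
qed

definition fstp :: recf where "fstp = Sub (Proj 0) (Tri (Mn unpf))"
definition sndp :: recf where "sndp = Sub (Mn unpf) fstp"

lemma ev_fstp: "ev 1 fstp (\<lambda>C xs. fst (prod_decode (xs!0)))"
  unfolding fstp_def by (rule ev_cong[OF ev_Sub[OF ev_proj ev_Tri[OF ev_unp]]]) (auto simp: prod_decode_least[of "xs!0" for xs])
lemma ev_sndp: "ev 1 sndp (\<lambda>C xs. snd (prod_decode (xs!0)))"
  unfolding sndp_def fstp_def by (rule ev_cong[OF ev_Sub[OF ev_unp ev_Sub[OF ev_proj ev_Tri[OF ev_unp]]]]) (auto simp: prod_decode_least[of "xs!0" for xs])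

definition Fst :: "recf \<Rightarrow> recf" where "Fst a = Comp fstp [a]"
definition Snd :: "recf \<Rightarrow> recf" where "Snd a = Comp sndp [a]"
definition Pair :: "recf \<Rightarrow> recf \<Rightarrow> recf" where "Pair a b = Add (Tri (Add a b)) a"

lemma ev_Fst: "ev n a ga \<Longrightarrow> ev n (Fst a) (\<lambda>C xs. fst (prod_decode (ga C xs)))"
  unfolding Fst_def using ev_comp1[OF _ ev_fstp] by fastforce
lemma ev_Snd: "ev n a ga \<Longrightarrow> ev n (Snd a) (\<lambda>C xs. snd (prod_decode (ga C xs)))"
  unfolding Snd_def using ev_comp1[OF _ ev_sndp] by fastforce
lemma ev_Pair: "ev n a ga \<Longrightarrow> ev n b gb \<Longrightarrow> ev n (Pair a b) (\<lambda>C xs. prod_encode (ga C xs, gb C xs))"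
  unfolding Pair_def by (rule ev_cong[OF ev_Add[OF ev_Tri[OF ev_Add]]]) (auto simp: prod_encode_def)


lemma dec_cong: "dec n r P \<Longrightarrow> (\<And>C xs. length xs = n \<Longrightarrow> P C xs = P' C xs) \<Longrightarrow> dec n r P'"
  unfolding dec_def by (erule ev_cong) auto

primrec memf :: "nat list \<Rightarrow> recf \<Rightarrow> recf" where
  "memf [] a = NOT (constp 0)"
| "memf (c # cs) a = OR (EQ a (constp c)) (memf cs a)"

lemma dec_memf: "ev n a ga \<Longrightarrow> dec n (memf cs a) (\<lambda>C xs. ga C xs \<in> set cs)"
proof (induction cs)
  case Nil then show ?case using dec_NOT[OF dec_TRUE] by simp
next
  case (Cons c cs)
  show ?case using dec_OR[OF dec_EQ[OF Cons.prems ev_const] Cons.IH[OF Cons.prems]] by simp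
qed

abbreviation pe :: "nat \<Rightarrow> nat \<Rightarrow> nat" where "pe a b \<equiv> prod_encode (a, b)"
abbreviation p1 :: "nat \<Rightarrow> nat" where "p1 x \<equiv> fst (prod_decode x)"
abbreviation p2 :: "nat \<Rightarrow> nat" where "p2 x \<equiv> snd (prod_decode x)"

definition Dk :: "nat \<Rightarrow> nat \<Rightarrow> nat \<Rightarrow> nat" where "Dk j a b = pe 0 (pe j (pe a b))"
definition Ek :: "nat \<Rightarrow> nat \<Rightarrow> nat \<Rightarrow> nat \<Rightarrow> nat" where "Ek j a b t = pe 1 (pe j (pe a (pe b t)))"
definition Sk :: "nat \<Rightarrow> nat" where "Sk i = pe 2 i"
definition Jk :: "nat \<Rightarrow> nat \<Rightarrow> nat" where "Jk n r = pe 3 (pe n r)"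
definition G :: "nat set \<Rightarrow> nat \<Rightarrow> nat \<Rightarrow> bool" where "G C x v \<longleftrightarrow> pe x v \<in> C"

definition Q1 :: "nat set \<Rightarrow> nat \<Rightarrow> bool" where
  "Q1 C m \<longleftrightarrow> (G C (p1 m) (p1 (p2 m)) \<and> G C (p1 m) (p2 (p2 m)) \<longrightarrow> p1 (p2 m) = p2 (p2 m))"
definition Q2 :: "nat set \<Rightarrow> nat \<Rightarrow> nat \<Rightarrow> bool" where
  "Q2 C m l \<longleftrightarrow> G C m l"
definition Q3 :: "nat \<Rightarrow> nat set \<Rightarrow> nat \<Rightarrow> nat \<Rightarrow> bool" where
  "Q3 k C m l \<longleftrightarrow> G C (Dk (p1 m) (p1 (p2 m)) (p2 (p2 m))) l \<and>
     G C (Dk (p1 m) (Suc (p1 (p2 m))) (Suc (p2 (p2 m)))) l \<and> l < k"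
definition Q4 :: "nat set \<Rightarrow> nat \<Rightarrow> bool" where
  "Q4 C m \<longleftrightarrow> G C (Ek (p1 m) (p1 (p2 m)) (p2 (p2 m)) 0) 0"
definition Q5 :: "nat set \<Rightarrow> nat \<Rightarrow> nat \<Rightarrow> bool" where
  "Q5 C m l \<longleftrightarrow> G C (Dk (p1 m) (p1 (p2 m) + p2 (p2 (p2 m))) (p1 (p2 (p2 m)))) (p1 l) \<and>
     G C (Ek (p1 m) (p1 (p2 m)) (p1 (p2 (p2 m))) (p2 (p2 (p2 m)))) (p1 (p2 l)) \<and>
     G C (Ek (p1 m) (p1 (p2 m)) (p1 (p2 (p2 m))) (Suc (p2 (p2 (p2 m))))) (p2 (p2 l)) \<and>
     p2 (p2 l) = Suc (pe (p1 l) (p1 (p2 l)))"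
definition Q6 :: "nat \<Rightarrow> nat list \<Rightarrow> nat set \<Rightarrow> nat \<Rightarrow> nat \<Rightarrow> bool" where
  "Q6 \<rho> FS C m l \<longleftrightarrow> G C (Ek (p1 m) (p1 (p2 m)) (p2 (p2 m)) (Suc (\<rho> + \<rho>))) (p1 l) \<and>
     G C (Dk (Suc (p1 m)) (p1 (p2 m) + \<rho>) (p2 (p2 m))) (p2 l) \<and> pe (p1 l) (p2 l) \<in> set FS"
definition Q7 :: "nat set \<Rightarrow> nat \<Rightarrow> nat \<Rightarrow> nat \<Rightarrow> bool" where
  "Q7 C m l w \<longleftrightarrow> G C (Sk 0) w \<and> G C (Sk m) (p1 l) \<and> G C (Sk (Suc m)) (p1 (p2 l)) \<and>
     G C (Dk 0 m 0) (p2 (p2 l)) \<and> (p1 l = 0 \<or> p1 l = Suc (pe (p2 (p2 l)) (p1 (p2 l))))"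
definition Q8 :: "nat set \<Rightarrow> nat \<Rightarrow> nat \<Rightarrow> bool" where
  "Q8 C m l \<longleftrightarrow> G C (Jk (p1 m) (p1 (p2 m))) (p1 l) \<and> p1 m \<le> p1 l \<and>
     (p1 (p2 (p2 m)) \<le> p1 (p2 m) \<and> p2 (p2 (p2 m)) \<le> p1 (p2 m) \<longrightarrow>
       G C (Dk (p1 l) (p1 (p2 (p2 m))) (p2 (p2 (p2 m)))) (p1 (p2 l)) \<and>
       G C (Dk 0 (p1 (p2 (p2 m))) (p2 (p2 (p2 m)))) (p2 (p2 l)) \<and> p1 (p2 l) = p2 (p2 l))"

definition Rpred :: "nat \<Rightarrow> nat \<Rightarrow> nat list \<Rightarrow> nat set \<Rightarrow> nat \<Rightarrow> nat \<Rightarrow> nat \<Rightarrow> bool" where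
  "Rpred k \<rho> FS C m l w \<longleftrightarrow> Q1 C m \<and> Q2 C m (p1 l) \<and> Q3 k C m (p1 (p2 l)) \<and> Q4 C m \<and>
     Q5 C m (p1 (p2 (p2 l))) \<and> Q6 \<rho> FS C m (p1 (p2 (p2 (p2 l)))) \<and>
     Q7 C m (p1 (p2 (p2 (p2 (p2 l))))) w \<and> Q8 C m (p2 (p2 (p2 (p2 (p2 l)))))"

definition GP :: "recf \<Rightarrow> recf \<Rightarrow> recf" where "GP x v = MEM (Pair x v)"
definition DP :: "recf \<Rightarrow> recf \<Rightarrow> recf \<Rightarrow> recf" where
  "DP j a b = Pair (constp 0) (Pair j (Pair a b))"
definition EP :: "recf \<Rightarrow> recf \<Rightarrow> recf \<Rightarrow> recf \<Rightarrow> recf" where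
  "EP j a b t = Pair (constp 1) (Pair j (Pair a (Pair b t)))"
definition SP :: "recf \<Rightarrow> recf" where "SP i = Pair (constp 2) i"
definition JP :: "recf \<Rightarrow> recf \<Rightarrow> recf" where "JP n r = Pair (constp 3) (Pair n r)"

lemma dec_GP: "ev n x gx \<Longrightarrow> ev n v gv \<Longrightarrow> dec n (GP x v) (\<lambda>C xs. G C (gx C xs) (gv C xs))"
  unfolding GP_def G_def by (rule dec_MEM[OF ev_Pair])
lemma ev_DP: "ev n j gj \<Longrightarrow> ev n a ga \<Longrightarrow> ev n b gb \<Longrightarrow> ev n (DP j a b) (\<lambda>C xs. Dk (gj C xs) (ga C xs) (gb C xs))"
  unfolding DP_def Dk_def by (intro ev_Pair ev_const)
lemma ev_EP: "ev n j gj \<Longrightarrow> ev n a ga \<Longrightarrow> ev n b gb \<Longrightarrow> ev n t gt \<Longrightarrow> ev n (EP j a b t) (\<lambda>C xs. Ek (gj C xs) (ga C xs) (gb C xs) (gt C xs))"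
  unfolding EP_def Ek_def by (intro ev_Pair ev_const)
lemma ev_SP: "ev n i gi \<Longrightarrow> ev n (SP i) (\<lambda>C xs. Sk (gi C xs))"
  unfolding SP_def Sk_def by (intro ev_Pair ev_const)
lemma ev_JP: "ev n a ga \<Longrightarrow> ev n b gb \<Longrightarrow> ev n (JP a b) (\<lambda>C xs. Jk (ga C xs) (gb C xs))"
  unfolding JP_def Jk_def by (intro ev_Pair ev_const)

lemmas combs = dec_GP ev_DP ev_EP ev_SP ev_JP ev_Pair ev_Fst ev_Snd ev_Add ev_Suc1 ev_const
  dec_AND dec_OR dec_IMP dec_EQ dec_LE dec_memf

definition q1p where "q1p M = IMP (AND (GP (Fst M) (Fst (Snd M))) (GP (Fst M) (Snd (Snd M)))) (EQ (Fst (Snd M)) (Snd (Snd M)))"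

lemma dec_q1p: "ev 3 M gm \<Longrightarrow> dec 3 (q1p M) (\<lambda>C xs. Q1 C (gm C xs))"
  unfolding q1p_def
  apply (rule dec_cong)
   apply (rule combs | assumption)+
  apply (simp add: Q1_def)
  done

definition "q2p M L = GP M L"

lemma dec_q2p: "ev 3 M gm \<Longrightarrow> ev 3 L gl \<Longrightarrow> dec 3 (q2p M L) (\<lambda>C xs. Q2 C (gm C xs) (gl C xs))"
  unfolding q2p_def
  apply (rule dec_cong)
   apply (rule combs | assumption)+
  apply (simp add: Q2_def)
  done

definition "q3p k M L = AND (GP (DP (Fst M) (Fst (Snd M)) (Snd (Snd M))) L) (AND (GP (DP (Fst M) (Suc1 (Fst (Snd M))) (Suc1 (Snd (Snd M)))) L) (LE (Suc1 L) (constp k)))"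

lemma dec_q3p: "ev 3 M gm \<Longrightarrow> ev 3 L gl \<Longrightarrow> dec 3 (q3p k M L) (\<lambda>C xs. Q3 k C (gm C xs) (gl C xs))"
  unfolding q3p_def
  apply (rule dec_cong)
   apply (rule combs | assumption)+
  apply (simp add: Q3_def Suc_le_eq)
  done

definition "q4p M L = GP (EP (Fst M) (Fst (Snd M)) (Snd (Snd M)) (constp 0)) (constp 0)"

lemma dec_q4p: "ev 3 M gm \<Longrightarrow> dec 3 (q4p M L) (\<lambda>C xs. Q4 C (gm C xs))"
  unfolding q4p_def
  apply (rule dec_cong)
   apply (rule combs | assumption)+
  apply (simp add: Q4_def)
  done

definition "q5p M L = AND (GP (DP (Fst M) (Add (Fst (Snd M)) (Snd (Snd (Snd M)))) (Fst (Snd (Snd M)))) (Fst L)) (AND (GP (EP (Fst M) (Fst (Snd M)) (Fst (Snd (Snd M))) (Snd (Snd (Snd M)))) (Fst (Snd L))) (AND (GP (EP (Fst M) (Fst (Snd M)) (Fst (Snd (Snd M))) (Suc1 (Snd (Snd (Snd M))))) (Snd (Snd L))) (EQ (Snd (Snd L)) (Suc1 (Pair (Fst L) (Fst (Snd L)))))))"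

lemma dec_q5p: "ev 3 M gm \<Longrightarrow> ev 3 L gl \<Longrightarrow> dec 3 (q5p M L) (\<lambda>C xs. Q5 C (gm C xs) (gl C xs))"
  unfolding q5p_def
  apply (rule dec_cong)
   apply (rule combs | assumption)+
  apply (simp add: Q5_def)
  done

definition "q6p \<rho> FS M L = AND (GP (EP (Fst M) (Fst (Snd M)) (Snd (Snd M)) (constp (Suc (\<rho>+\<rho>)))) (Fst L)) (AND (GP (DP (Suc1 (Fst M)) (Add (Fst (Snd M)) (constp \<rho>)) (Snd (Snd M))) (Snd L)) (memf FS (Pair (Fst L) (Snd L))))"

lemma dec_q6p: "ev 3 M gm \<Longrightarrow> ev 3 L gl \<Longrightarrow> dec 3 (q6p \<rho> FS M L) (\<lambda>C xs. Q6 \<rho> FS C (gm C xs) (gl C xs))"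
  unfolding q6p_def
  apply (rule dec_cong)
   apply (rule combs | assumption)+
  apply (simp add: Q6_def)
  done

definition "q7p M L W = AND (GP (SP (constp 0)) W) (AND (GP (SP M) (Fst L)) (AND (GP (SP (Suc1 M)) (Fst (Snd L))) (AND (GP (DP (constp 0) M (constp 0)) (Snd (Snd L))) (OR (EQ (Fst L) (constp 0)) (EQ (Fst L) (Suc1 (Pair (Snd (Snd L)) (Fst (Snd L)))))))))"

lemma dec_q7p: "ev 3 M gm \<Longrightarrow> ev 3 L gl \<Longrightarrow> ev 3 W gw \<Longrightarrow> dec 3 (q7p M L W) (\<lambda>C xs. Q7 C (gm C xs) (gl C xs) (gw C xs))"
  unfolding q7p_def
  apply (rule dec_cong)
   apply (rule combs | assumption)+
  apply (simp add: Q7_def)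
  done

definition "q8p M L = AND (GP (JP (Fst M) (Fst (Snd M))) (Fst L)) (AND (LE (Fst M) (Fst L)) (IMP (AND (LE (Fst (Snd (Snd M))) (Fst (Snd M))) (LE (Snd (Snd (Snd M))) (Fst (Snd M)))) (AND (GP (DP (Fst L) (Fst (Snd (Snd M))) (Snd (Snd (Snd M)))) (Fst (Snd L))) (AND (GP (DP (constp 0) (Fst (Snd (Snd M))) (Snd (Snd (Snd M)))) (Snd (Snd L))) (EQ (Fst (Snd L)) (Snd (Snd L)))))))"

lemma dec_q8p: "ev 3 M gm \<Longrightarrow> ev 3 L gl \<Longrightarrow> dec 3 (q8p M L) (\<lambda>C xs. Q8 C (gm C xs) (gl C xs))"
  unfolding q8p_def
  apply (rule dec_cong)
   apply (rule combs | assumption)+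
  apply (simp add: Q8_def)
  done


definition "Rprog k \<rho> FS = (let M = Proj 0; L = Proj 1; W = Proj 2 in
  AND (q1p M) (AND (q2p M (Fst L)) (AND (q3p k M (Fst (Snd L))) (AND (q4p M L)
  (AND (q5p M (Fst (Snd (Snd L)))) (AND (q6p \<rho> FS M (Fst (Snd (Snd (Snd L)))))
  (AND (q7p M (Fst (Snd (Snd (Snd (Snd L))))) W) (q8p M (Snd (Snd (Snd (Snd (Snd L)))))))))))))"

lemma dec_Rprog: "dec 3 (Rprog k \<rho> FS) (\<lambda>C xs. Rpred k \<rho> FS C (xs!0) (xs!1) (xs!2))"
proof -
  have e0: "ev 3 (Proj 0) (\<lambda>C xs. xs!0)" and e1: "ev 3 (Proj 1) (\<lambda>C xs. xs!1)"
    and e2: "ev 3 (Proj 2) (\<lambda>C xs. xs!2)" by (auto intro: ev_proj)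
  show ?thesis
    unfolding Rprog_def Let_def
    apply (rule dec_cong)
     apply (rule dec_AND dec_q1p dec_q2p dec_q3p dec_q4p dec_q5p dec_q6p dec_q7p dec_q8p
       ev_Fst ev_Snd e0 e1 e2)+
    apply (simp add: Rpred_def)
    done
qed

lemma recursive_Rpred: "recursive_pred (\<lambda>C m l w. Rpred k \<rho> FS C m l w)"
  unfolding recursive_pred_def
proof (intro exI allI)
  fix C m l w
  have "rec_eval C (Rprog k \<rho> FS) [m, l, w] (if Rpred k \<rho> FS C m l w then 0 else 1)"
    using evD[OF dec_Rprog[unfolded dec_def], of "[m,l,w]"] by simp
  then show "(Rpred k \<rho> FS C m l w \<longrightarrow> rec_eval C (Rprog k \<rho> FS) [m, l, w] 0) \<and>
       (\<not> Rpred k \<rho> FS C m l w \<longrightarrow> rec_eval C (Rprog k \<rho> FS) [m, l, w] 1)"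
    by (cases "Rpred k \<rho> FS C m l w") simp_all
qed




definition cyl :: "(int \<Rightarrow> nat) \<Rightarrow> nat \<Rightarrow> (int \<Rightarrow> nat) set" where
  "cyl x r = {y. \<forall>d. \<bar>d\<bar> \<le> int r \<longrightarrow> y d = x d}"

lemma cyl_PiE: "cyl x r = Pi\<^sub>E UNIV (\<lambda>d. if \<bar>d\<bar> \<le> int r then {x d} else UNIV)"
  unfolding cyl_def PiE_def Pi_def by auto

lemma open_cyl: "open (cyl x r)"
  unfolding cyl_PiE
proof (rule open_PiE)
  show "open (if \<bar>d\<bar> \<le> int r then {x d} else UNIV)" for d by (simp add: open_discrete)
  have "{d. (if \<bar>d\<bar> \<le> int r then {x d} else UNIV) \<noteq> UNIV} \<subseteq> {- int r .. int r}" by auto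
  then show "finite {d. (if \<bar>d\<bar> \<le> int r then {x d} else UNIV) \<noteq> UNIV}"
    by (rule finite_subset) simp
qed

lemma x_in_cyl: "x \<in> cyl x r" unfolding cyl_def by auto

lemma cyl_mono: "r \<le> r' \<Longrightarrow> cyl x r' \<subseteq> cyl x r" unfolding cyl_def by auto

lemma basic_nbhd:
  fixes U :: "(int \<Rightarrow> nat) set"
  assumes "open U" "x \<in> U" shows "\<exists>r. cyl x r \<subseteq> U"
proof -
  from assms obtain V where V: "finite {i \<in> UNIV. V i \<noteq> topspace euclidean}"
    "x \<in> Pi\<^sub>E UNIV V" "Pi\<^sub>E UNIV V \<subseteq> U"
    unfolding open_fun_def openin_product_topology_alt by blast
  define F where "F = {i. V i \<noteq> UNIV}"
  have fin: "finite F" using V(1) unfolding F_def by simp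
  define r where "r = Max (insert 0 ((\<lambda>i. nat \<bar>i\<bar>) ` F))"
  have rb: "i \<in> F \<Longrightarrow> \<bar>i\<bar> \<le> int r" for i
  proof -
    assume "i \<in> F"
    then have "nat \<bar>i\<bar> \<le> r" unfolding r_def using fin by (intro Max_ge) auto
    then show ?thesis by simp
  qed
  have "cyl x r \<subseteq> Pi\<^sub>E UNIV V"
  proof
    fix y assume y: "y \<in> cyl x r"
    have "y i \<in> V i" for i
    proof (cases "i \<in> F")
      case True
      then have "y i = x i" using y rb unfolding cyl_def by auto
      then show ?thesis using V(2) by auto
    next
      case False then show ?thesis unfolding F_def by auto
    qed
    then show "y \<in> Pi\<^sub>E UNIV V" by auto
  qed
  then show ?thesis using V(3) by blast
qed

lemma closure_cyl_iff:
  fixes A :: "(int \<Rightarrow> nat) set"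
  shows "x \<in> closure A \<longleftrightarrow> (\<forall>r. \<exists>y\<in>A. \<forall>d. \<bar>d\<bar> \<le> int r \<longrightarrow> y d = x d)"
proof
  assume "x \<in> closure A"
  show "\<forall>r. \<exists>y\<in>A. \<forall>d. \<bar>d\<bar> \<le> int r \<longrightarrow> y d = x d"
  proof
    fix r
    have "cyl x r \<inter> closure A \<noteq> {}" using \<open>x \<in> closure A\<close> x_in_cyl by blast
    then have "cyl x r \<inter> A \<noteq> {}" using open_Int_closure_eq_empty[OF open_cyl] by blast
    then show "\<exists>y\<in>A. \<forall>d. \<bar>d\<bar> \<le> int r \<longrightarrow> y d = x d" unfolding cyl_def by blast
  qed
next
  assume H: "\<forall>r. \<exists>y\<in>A. \<forall>d. \<bar>d\<bar> \<le> int r \<longrightarrow> y d = x d"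
  show "x \<in> closure A"
    unfolding closure_iff_nhds_not_empty
  proof (intro allI impI)
    fix B S assume "S \<subseteq> B" "open S" "x \<in> S"
    then obtain r where "cyl x r \<subseteq> S" using basic_nbhd by blast
    moreover obtain y where "y \<in> A" "\<forall>d. \<bar>d\<bar> \<le> int r \<longrightarrow> y d = x d" using H by blast
    ultimately show "A \<inter> B \<noteq> {}" using \<open>S \<subseteq> B\<close> unfolding cyl_def by blast
  qed
qed

lemma compact_full_shift: "compact (full_shift k)"
proof -
  have e: "full_shift k = Pi\<^sub>E UNIV (\<lambda>_. {..<k})" unfolding full_shift_def PiE_def Pi_def by auto
  have "compactin (product_topology (\<lambda>_. euclidean) UNIV) (Pi\<^sub>E UNIV (\<lambda>_::int. {..<k::nat}))"
    by (simp add: compactin_PiE finite_imp_compact)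
  then show ?thesis unfolding e euclidean_product_topology by simp
qed


definition sh :: "int \<Rightarrow> (int \<Rightarrow> nat) \<Rightarrow> (int \<Rightarrow> nat)" where
  "sh n x = (\<lambda>i. x (i + n))"

lemma sh_fs: "x \<in> full_shift k \<Longrightarrow> sh n x \<in> full_shift k"
  unfolding sh_def full_shift_def by auto

lemma sh_sh: "sh a (sh b x) = sh (a + b) x"
  unfolding sh_def by (simp add: ac_simps)

lemma sh_0: "sh 0 x = x" unfolding sh_def by simp

lemma shift_sh: "shift x = sh 1 x" unfolding shift_def sh_def by simp

lemma ca_sh_nat:
  assumes ca: "cellular_automaton k f" and x: "x \<in> full_shift k"
  shows "f (sh (int n) x) = sh (int n) (f x)"
proof (induction n)
  case 0 then show ?case by (simp add: sh_0)
next
  case (Suc n)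
  have e: "sh (int (Suc n)) z = shift (sh (int n) z)" for z
    by (simp add: shift_sh sh_sh add.commute)
  have "f (shift (sh (int n) x)) = shift (f (sh (int n) x))"
    using ca sh_fs[OF x] unfolding cellular_automaton_def by blast
  then show ?case using Suc by (simp only: e)
qed

lemma ca_sh:
  assumes ca: "cellular_automaton k f" and x: "x \<in> full_shift k"
  shows "f (sh n x) = sh n (f x)"
proof (cases "n \<ge> 0")
  case True
  define m where "m = nat n"
  have "n = int m" using True unfolding m_def by simp
  then show ?thesis using ca_sh_nat[OF ca x] by simp
next
  case False
  define m where "m = nat (- n)"
  have n: "n = - int m" using False unfolding m_def by simp
  let ?y = "sh n x"
  have y: "?y \<in> full_shift k" by (rule sh_fs[OF x])
  have "x = sh (int m) ?y" by (simp add: sh_sh n sh_0)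
  then have "f x = sh (int m) (f ?y)" using ca_sh_nat[OF ca y, of m] by metis
  then have "sh n (f x) = f ?y" by (simp add: sh_sh n sh_0)
  then show ?thesis by simp
qed

lemma ca_at: "cellular_automaton k f \<Longrightarrow> x \<in> full_shift k \<Longrightarrow> f x i = f (sh i x) 0"
  using ca_sh[of k f x i] by (simp add: sh_def)

lemma ca_local0:
  assumes ca: "cellular_automaton k f" and x: "x \<in> full_shift k"
  shows "\<exists>r. \<forall>y\<in>full_shift k. y \<in> cyl x r \<longrightarrow> f y 0 = f x 0"
proof -
  have c: "continuous_on (full_shift k) (\<lambda>y. f y 0)"
    using ca unfolding cellular_automaton_def
    by (intro continuous_on_compose2[OF continuous_on_product_coordinates, of _ f, simplified]) auto
  obtain A where A: "open A" "A \<inter> full_shift k = (\<lambda>y. f y 0) -` {f x 0} \<inter> full_shift k"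
    using c unfolding continuous_on_open_invariant by (meson open_discrete)
  have "x \<in> A" using A(2) x by blast
  then obtain r where "cyl x r \<subseteq> A" using basic_nbhd[OF A(1)] by blast
  then show ?thesis using A(2) by blast
qed

lemma ca_local:
  assumes ca: "cellular_automaton k f"
  shows "\<exists>\<rho>. \<forall>y\<in>full_shift k. \<forall>z\<in>full_shift k. \<forall>i.
     (\<forall>d. \<bar>d\<bar> \<le> int \<rho> \<longrightarrow> y (i + d) = z (i + d)) \<longrightarrow> f y i = f z i"
proof -
  define R where "R x = (SOME r. \<forall>y\<in>full_shift k. y \<in> cyl x r \<longrightarrow> f y 0 = f x 0)" for x
  have R: "x \<in> full_shift k \<Longrightarrow> y \<in> full_shift k \<Longrightarrow> y \<in> cyl x (R x) \<Longrightarrow> f y 0 = f x 0" for x y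
    unfolding R_def using someI_ex[OF ca_local0[OF ca]] by blast
  have cov: "full_shift k \<subseteq> (\<Union>x\<in>full_shift k. cyl x (R x))" using x_in_cyl by blast
  obtain T where T: "T \<subseteq> full_shift k" "finite T" "full_shift k \<subseteq> (\<Union>x\<in>T. cyl x (R x))"
    by (rule compactE_image[OF compact_full_shift open_cyl cov])
  define \<rho> where "\<rho> = Max (insert 0 (R ` T))"
  have rho: "x \<in> T \<Longrightarrow> R x \<le> \<rho>" for x unfolding \<rho>_def using T(2) by auto
  have loc0: "f y 0 = f z 0" if y: "y \<in> full_shift k" and z: "z \<in> full_shift k"
      and a: "\<forall>d. \<bar>d\<bar> \<le> int \<rho> \<longrightarrow> y d = z d" for y z
  proof -
    obtain x where x: "x \<in> T" "y \<in> cyl x (R x)" using T(3) y by blast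
    have "z \<in> cyl x (R x)" unfolding cyl_def
    proof (intro CollectI allI impI)
      fix d assume "\<bar>d\<bar> \<le> int (R x)"
      moreover have "int (R x) \<le> int \<rho>" using rho[OF x(1)] by simp
      ultimately show "z d = x d" using x(2) a unfolding cyl_def by force
    qed
    then show ?thesis using R[OF _ y x(2)] R[OF _ z] x(1) T(1) by auto
  qed
  show ?thesis
  proof (intro exI ballI allI impI)
    fix y z i assume y: "y \<in> full_shift k" and z: "z \<in> full_shift k"
      and a: "\<forall>d. \<bar>d\<bar> \<le> int \<rho> \<longrightarrow> y (i + d) = z (i + d)"
    have "\<forall>d. \<bar>d\<bar> \<le> int \<rho> \<longrightarrow> sh i y d = sh i z d"
      using a unfolding sh_def by (simp add: add.commute)
    then have "f (sh i y) 0 = f (sh i z) 0"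
      using loc0[OF sh_fs[OF y] sh_fs[OF z]] by blast
    then show "f y i = f z i" using ca_at[OF ca y] ca_at[OF ca z] by simp
  qed
qed




definition windows :: "nat \<Rightarrow> nat \<Rightarrow> nat list set" where
  "windows k \<rho> = {ws. set ws \<subseteq> {..<k} \<and> length ws = Suc (\<rho> + \<rho>)}"

definition ext :: "nat \<Rightarrow> nat list \<Rightarrow> (int \<Rightarrow> nat)" where
  "ext \<rho> ws = (\<lambda>i. if \<bar>i\<bar> \<le> int \<rho> then ws ! nat (i + int \<rho>) else 0)"

definition FSset :: "nat \<Rightarrow> nat \<Rightarrow> ((int \<Rightarrow> nat) \<Rightarrow> (int \<Rightarrow> nat)) \<Rightarrow> nat set" where
  "FSset k \<rho> f = (\<lambda>ws. pe (list_encode (rev ws)) (f (ext \<rho> ws) 0)) ` windows k \<rho>"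

lemma finite_windows: "finite (windows k \<rho>)"
proof -
  have "windows k \<rho> = {ws. set ws \<subseteq> {..<k} \<and> length ws = Suc (\<rho> + \<rho>)}" by (simp add: windows_def)
  then show ?thesis using finite_lists_length_eq[of "{..<k}" "Suc (\<rho>+\<rho>)"] by simp
qed

definition FS :: "nat \<Rightarrow> nat \<Rightarrow> ((int \<Rightarrow> nat) \<Rightarrow> (int \<Rightarrow> nat)) \<Rightarrow> nat list" where
  "FS k \<rho> f = (SOME xs. set xs = FSset k \<rho> f)"

lemma set_FS: "set (FS k \<rho> f) = FSset k \<rho> f"
  unfolding FS_def FSset_def by (rule someI_ex) (simp add: finite_list finite_windows)

definition yT :: "(nat \<Rightarrow> nat) \<Rightarrow> nat \<Rightarrow> int \<Rightarrow> nat" where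
  "yT T j i = (if i \<ge> 0 then T (Dk j (nat i) 0) else T (Dk j 0 (nat (- i))))"

lemma ext_fs: "ws \<in> windows k \<rho> \<Longrightarrow> 0 < k \<Longrightarrow> ext \<rho> ws \<in> full_shift k"
  unfolding windows_def ext_def full_shift_def by (auto simp: subset_eq)

lemma sound_T:
  fixes T :: "nat \<Rightarrow> nat"
  assumes ca: "cellular_automaton k f"
    and loc: "\<forall>y\<in>full_shift k. \<forall>z\<in>full_shift k. \<forall>i.
       (\<forall>d. \<bar>d\<bar> \<le> int \<rho> \<longrightarrow> y (i + d) = z (i + d)) \<longrightarrow> f y i = f z i"
    and h3: "\<And>j a b. T (Dk j a b) = T (Dk j (Suc a) (Suc b)) \<and> T (Dk j a b) < k"
    and h4: "\<And>j a b. T (Ek j a b 0) = 0"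
    and h5: "\<And>j a b t. T (Ek j a b (Suc t)) = Suc (pe (T (Dk j (a + t) b)) (T (Ek j a b t)))"
    and h6: "\<And>j a b. pe (T (Ek j a b (Suc (\<rho> + \<rho>)))) (T (Dk (Suc j) (a + \<rho>) b)) \<in> set (FS k \<rho> f)"
    and h7a: "T (Sk 0) = w"
    and h7: "\<And>i. T (Sk i) = 0 \<or> T (Sk i) = Suc (pe (T (Dk 0 i 0)) (T (Sk (Suc i))))"
    and h8: "\<And>n r. n \<le> T (Jk n r) \<and> (\<forall>a b. a \<le> r \<and> b \<le> r \<longrightarrow> T (Dk (T (Jk n r)) a b) = T (Dk 0 a b))"
  shows "w \<in> language_code (nonwandering k f)"
proof -
  let ?y = "yT T"
  have Dsh: "T (Dk j (a + c) (b + c)) = T (Dk j a b)" for j a b c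
    by (induction c) (use h3 in auto)
  have Dy: "T (Dk j a b) = ?y j (int a - int b)" for j a b
  proof (cases "b \<le> a")
    case True
    then have "T (Dk j a b) = T (Dk j (a - b) 0)" using Dsh[where j=j and a="a-b" and b=0 and c=b] True by simp
    then show ?thesis using True unfolding yT_def by (simp add: nat_diff_distrib)
  next
    case False
    then have "T (Dk j a b) = T (Dk j 0 (b - a))" using Dsh[where j=j and a=0 and b="b-a" and c=a] False by simp
    then show ?thesis using False unfolding yT_def by (simp add: nat_diff_distrib)
  qed
  have yfs: "?y j \<in> full_shift k" for j
    unfolding full_shift_def yT_def using h3 by auto
  have kpos: "0 < k" using h3[of 0 0 0] by simp
  have E: "T (Ek j a b t) = list_encode (rev (map (\<lambda>s. ?y j (int (a + s) - int b)) [0..<t]))" for j a b t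
    by (induction t) (simp_all add: h4 h5 Dy)
  have step: "?y (Suc j) = f (?y j)" for j
  proof
    fix i :: int
    define a where "a = nat (\<bar>i\<bar> + i)"
    define b where "b = nat \<bar>i\<bar> + \<rho>"
    have i: "int (a + \<rho>) - int b = i" unfolding a_def b_def by simp
    define ws where "ws = map (\<lambda>s. ?y j (int (a + s) - int b)) [0..<Suc (\<rho> + \<rho>)]"
    have "pe (list_encode (rev ws)) (?y (Suc j) i) \<in> FSset k \<rho> f"
      using h6[of j a b] unfolding set_FS E Dy i ws_def .
    then obtain ws' where ws': "ws' \<in> windows k \<rho>"
      "pe (list_encode (rev ws)) (?y (Suc j) i) = pe (list_encode (rev ws')) (f (ext \<rho> ws') 0)"
      unfolding FSset_def by blast
    then have "ws = ws'" and yv: "?y (Suc j) i = f (ext \<rho> ws') 0"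
      by (auto simp: list_encode_eq)
    have agree: "\<forall>d. \<bar>d\<bar> \<le> int \<rho> \<longrightarrow> ext \<rho> ws' (0 + d) = sh i (?y j) (0 + d)"
    proof (intro allI impI)
      fix d :: int assume d: "\<bar>d\<bar> \<le> int \<rho>"
      have n: "nat (d + int \<rho>) < Suc (\<rho> + \<rho>)" using d by simp
      have "ext \<rho> ws' d = ws ! nat (d + int \<rho>)" using d \<open>ws = ws'\<close> unfolding ext_def by simp
      also have "\<dots> = ?y j (int (a + nat (d + int \<rho>)) - int b)"
        unfolding ws_def using n by (simp del: upt_Suc)
      also have "int (a + nat (d + int \<rho>)) - int b = d + i" using d i by simp
      finally show "ext \<rho> ws' (0 + d) = sh i (?y j) (0 + d)" unfolding sh_def by (simp add: add.commute)
    qed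
    have "f (ext \<rho> ws') 0 = f (sh i (?y j)) 0"
      using loc ext_fs[OF ws'(1) kpos] sh_fs[OF yfs] agree by blast
    then show "?y (Suc j) i = f (?y j) i" using yv ca_at[OF ca yfs] by simp
  qed
  have orbit: "?y j = (f ^^ j) (?y 0)" for j
    by (induction j) (simp_all add: step)
  have word: "\<exists>m. T (Sk i) = list_encode (map (\<lambda>s. ?y 0 (int (i + s))) [0..<m])" for i
  proof (induction "T (Sk i)" arbitrary: i rule: less_induct)
    case less
    show ?case
    proof (cases "T (Sk i) = 0")
      case True then show ?thesis by (intro exI[of _ 0]) simp
    next
      case False
      then have e: "T (Sk i) = Suc (pe (T (Dk 0 i 0)) (T (Sk (Suc i))))" using h7[of i] False by simp
      then have "T (Sk (Suc i)) < T (Sk i)" using le_prod_encode_2 by (simp add: le_imp_less_Suc)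
      then obtain m where m: "T (Sk (Suc i)) = list_encode (map (\<lambda>s. ?y 0 (int (Suc i + s))) [0..<m])"
        using less by blast
      have "map (\<lambda>s. ?y 0 (int (i + s))) [0..<Suc m] = ?y 0 (int i) # map (\<lambda>s. ?y 0 (int (Suc i + s))) [0..<m]"
        by (simp only: map_upt_Suc) (simp add: ac_simps)
      then show ?thesis using e m Dy[of 0 i 0]
        by (intro exI[of _ "Suc m"]) simp
    qed
  qed
  obtain m where wm: "w = list_encode (map (\<lambda>s. ?y 0 (int s)) [0..<m])"
    using word[of 0] h7a by auto
  have nw: "?y 0 \<in> nonwandering k f"
    unfolding nonwandering_def
  proof (intro CollectI conjI allI)
    show "?y 0 \<in> full_shift k" by (rule yfs)
    fix n
    show "?y 0 \<in> closure ((\<lambda>j. (f ^^ j) (?y 0)) ` {n..})"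
      unfolding closure_cyl_iff
    proof
      fix r
      let ?j = "T (Jk n r)"
      have "\<forall>d. \<bar>d\<bar> \<le> int r \<longrightarrow> (f ^^ ?j) (?y 0) d = ?y 0 d"
      proof (intro allI impI)
        fix d :: int assume d: "\<bar>d\<bar> \<le> int r"
        define a where "a = nat (max d 0)"
        define b where "b = nat (max (- d) 0)"
        have ab: "a \<le> r" "b \<le> r" "int a - int b = d" using d unfolding a_def b_def by auto
        have "?y ?j d = ?y 0 d" using h8[of n r] ab Dy by metis
        then show "(f ^^ ?j) (?y 0) d = ?y 0 d" using orbit by metis
      qed
      then show "\<exists>z\<in>(\<lambda>j. (f ^^ j) (?y 0)) ` {n..}. \<forall>d. \<bar>d\<bar> \<le> int r \<longrightarrow> z d = ?y 0 d"
        using h8[of n r] by force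
    qed
  qed
  show ?thesis unfolding language_code_def language_def
    using nw wm by blast
qed


lemma extract_T:
  assumes H: "\<And>m. \<exists>l. Rpred k \<rho> FSl C m l w"
  shows "\<exists>T. (\<forall>j a b. T (Dk j a b) = T (Dk j (Suc a) (Suc b)) \<and> T (Dk j a b) < k) \<and>
    (\<forall>j a b. T (Ek j a b 0) = 0) \<and>
    (\<forall>j a b t. T (Ek j a b (Suc t)) = Suc (pe (T (Dk j (a + t) b)) (T (Ek j a b t)))) \<and>
    (\<forall>j a b. pe (T (Ek j a b (Suc (\<rho> + \<rho>)))) (T (Dk (Suc j) (a + \<rho>) b)) \<in> set FSl) \<and>
    T (Sk 0) = w \<and>
    (\<forall>i. T (Sk i) = 0 \<or> T (Sk i) = Suc (pe (T (Dk 0 i 0)) (T (Sk (Suc i))))) \<and>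
    (\<forall>n r. n \<le> T (Jk n r) \<and> (\<forall>a b. a \<le> r \<and> b \<le> r \<longrightarrow> T (Dk (T (Jk n r)) a b) = T (Dk 0 a b)))"
proof -
  have uniq: "G C x v \<Longrightarrow> G C x v' \<Longrightarrow> v = v'" for x v v'
  proof -
    assume "G C x v" "G C x v'"
    obtain l where "Rpred k \<rho> FSl C (pe x (pe v v')) l w" using H by blast
    then show "v = v'" using \<open>G C x v\<close> \<open>G C x v'\<close> unfolding Rpred_def Q1_def by simp
  qed
  have exi: "\<exists>v. G C x v" for x
  proof -
    obtain l where "Rpred k \<rho> FSl C x l w" using H by blast
    then show ?thesis unfolding Rpred_def Q2_def by blast
  qed
  define T where "T x = (THE v. G C x v)" for x
  have GT: "G C x v \<longleftrightarrow> v = T x" for x v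
  proof -
    obtain v0 where v0: "G C x v0" using exi by blast
    have "T x = v0" unfolding T_def using v0 uniq by blast
    then show ?thesis using v0 uniq by blast
  qed
  have GT': "G C x v \<longleftrightarrow> T x = v" for x v using GT by auto
  have h3: "T (Dk j a b) = T (Dk j (Suc a) (Suc b)) \<and> T (Dk j a b) < k" for j a b
  proof -
    obtain l where "Rpred k \<rho> FSl C (pe j (pe a b)) l w" using H by blast
    then show ?thesis unfolding Rpred_def Q3_def GT' by simp
  qed
  have h4: "T (Ek j a b 0) = 0" for j a b
  proof -
    obtain l where "Rpred k \<rho> FSl C (pe j (pe a b)) l w" using H by blast
    then show ?thesis unfolding Rpred_def Q4_def GT' by simp
  qed
  have h5: "T (Ek j a b (Suc t)) = Suc (pe (T (Dk j (a + t) b)) (T (Ek j a b t)))" for j a b t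
  proof -
    obtain l where "Rpred k \<rho> FSl C (pe j (pe a (pe b t))) l w" using H by blast
    then show ?thesis unfolding Rpred_def Q5_def GT' by simp
  qed
  have h6: "pe (T (Ek j a b (Suc (\<rho> + \<rho>)))) (T (Dk (Suc j) (a + \<rho>) b)) \<in> set FSl" for j a b
  proof -
    obtain l where "Rpred k \<rho> FSl C (pe j (pe a b)) l w" using H by blast
    then show ?thesis unfolding Rpred_def Q6_def GT' by simp
  qed
  have h7: "T (Sk 0) = w \<and> (T (Sk i) = 0 \<or> T (Sk i) = Suc (pe (T (Dk 0 i 0)) (T (Sk (Suc i)))))" for i
  proof -
    obtain l where "Rpred k \<rho> FSl C i l w" using H by blast
    then show ?thesis unfolding Rpred_def Q7_def GT' by auto
  qed
  have h8: "n \<le> T (Jk n r) \<and> (a \<le> r \<and> b \<le> r \<longrightarrow> T (Dk (T (Jk n r)) a b) = T (Dk 0 a b))" for n r a b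
  proof -
    obtain l where "Rpred k \<rho> FSl C (pe n (pe r (pe a b))) l w" using H by blast
    then show ?thesis unfolding Rpred_def Q8_def GT' by auto
  qed
  show ?thesis
    apply (rule exI[of _ T])
    using h3 h4 h5 h6 h7 h8 by blast
qed


lemma pe_surj: "\<exists>a b. m = pe a b"
  by (metis prod_decode_inverse surj_pair)

lemma complete:
  assumes ca: "cellular_automaton k f"
    and loc: "\<forall>y\<in>full_shift k. \<forall>z\<in>full_shift k. \<forall>i.
       (\<forall>d. \<bar>d\<bar> \<le> int \<rho> \<longrightarrow> y (i + d) = z (i + d)) \<longrightarrow> f y i = f z i"
    and xN: "x \<in> nonwandering k f"
    and w: "w = list_encode ws" and ws: "ws = map (\<lambda>i. x (int i)) [0..<m0]"
  shows "\<exists>C. \<forall>m. \<exists>l. Rpred k \<rho> (FS k \<rho> f) C m l w"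
proof -
  define y where "y j = (f ^^ j) x" for j
  have xfs: "x \<in> full_shift k" using xN unfolding nonwandering_def by blast
  have yfs: "y j \<in> full_shift k" for j
    unfolding y_def by (induction j) (use xfs ca in \<open>auto simp: cellular_automaton_def\<close>)
  have ystep: "y (Suc j) = f (y j)" for j unfolding y_def by simp
  have y0: "y 0 = x" unfolding y_def by simp
  define Jf where "Jf n r = (SOME j. n \<le> j \<and> (\<forall>d. \<bar>d\<bar> \<le> int r \<longrightarrow> y j d = x d))" for n r
  have Jf: "n \<le> Jf n r \<and> (\<forall>d. \<bar>d\<bar> \<le> int r \<longrightarrow> y (Jf n r) d = x d)" for n r
  proof -
    have "x \<in> closure ((\<lambda>j. (f ^^ j) x) ` {n..})" using xN unfolding nonwandering_def by blast
    then obtain z where "z \<in> (\<lambda>j. (f ^^ j) x) ` {n..}" "\<forall>d. \<bar>d\<bar> \<le> int r \<longrightarrow> z d = x d"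
      unfolding closure_cyl_iff by blast
    then have "\<exists>j. n \<le> j \<and> (\<forall>d. \<bar>d\<bar> \<le> int r \<longrightarrow> y j d = x d)" unfolding y_def by auto
    then show ?thesis unfolding Jf_def by (rule someI_ex)
  qed
  define V where "V key = (case prod_decode key of (tag, rest) \<Rightarrow>
      if tag = 0 then (case prod_decode rest of (j, ab) \<Rightarrow> case prod_decode ab of (a, b) \<Rightarrow> y j (int a - int b))
      else if tag = 1 then (case prod_decode rest of (j, r1) \<Rightarrow> case prod_decode r1 of (a, r2) \<Rightarrow>
           case prod_decode r2 of (b, t) \<Rightarrow> list_encode (rev (map (\<lambda>s. y j (int (a + s) - int b)) [0..<t])))
      else if tag = 2 then list_encode (drop rest ws)
      else if tag = 3 then (case prod_decode rest of (n, r) \<Rightarrow> Jf n r)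
      else 0)" for key
  have VD: "V (Dk j a b) = y j (int a - int b)" for j a b unfolding V_def Dk_def by simp
  have VE: "V (Ek j a b t) = list_encode (rev (map (\<lambda>s. y j (int (a + s) - int b)) [0..<t]))" for j a b t
    unfolding V_def Ek_def by simp
  have VS: "V (Sk i) = list_encode (drop i ws)" for i unfolding V_def Sk_def by simp
  have VJ: "V (Jk n r) = Jf n r" for n r unfolding V_def Jk_def by simp
  define C where "C = range (\<lambda>key. pe key (V key))"
  have GV: "G C z v \<longleftrightarrow> V z = v" for z v unfolding G_def C_def by auto
  have kpos: "0 < k" using yfs[of 0] unfolding full_shift_def by auto
  have q3: "Q3 k C m (V (Dk (p1 m) (p1 (p2 m)) (p2 (p2 m))))" for m
    using yfs unfolding Q3_def GV VD full_shift_def by simp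
  have q4: "Q4 C m" for m unfolding Q4_def GV VE by simp
  have q5: "Q5 C m (pe (V (Dk (p1 m) (p1 (p2 m) + p2 (p2 (p2 m))) (p1 (p2 (p2 m)))))
      (pe (V (Ek (p1 m) (p1 (p2 m)) (p1 (p2 (p2 m))) (p2 (p2 (p2 m)))))
          (V (Ek (p1 m) (p1 (p2 m)) (p1 (p2 (p2 m))) (Suc (p2 (p2 (p2 m))))))))" for m
    unfolding Q5_def GV VE VD by simp
  have q6: "Q6 \<rho> (FS k \<rho> f) C m (pe (V (Ek (p1 m) (p1 (p2 m)) (p2 (p2 m)) (Suc (\<rho> + \<rho>))))
      (V (Dk (Suc (p1 m)) (p1 (p2 m) + \<rho>) (p2 (p2 m)))))" for m
  proof -
    obtain j a b where m: "m = pe j (pe a b)" using pe_surj by metis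
    define i where "i = int (a + \<rho>) - int b"
    define wsx where "wsx = map (\<lambda>s. y j (int (a + s) - int b)) [0..<Suc (\<rho> + \<rho>)]"
    have win: "wsx \<in> windows k \<rho>" unfolding windows_def wsx_def using yfs unfolding full_shift_def by auto
    have agree: "\<forall>d. \<bar>d\<bar> \<le> int \<rho> \<longrightarrow> ext \<rho> wsx (0 + d) = sh i (y j) (0 + d)"
    proof (intro allI impI)
      fix d :: int assume d: "\<bar>d\<bar> \<le> int \<rho>"
      have n: "nat (d + int \<rho>) < Suc (\<rho> + \<rho>)" using d by simp
      have "ext \<rho> wsx d = wsx ! nat (d + int \<rho>)" using d unfolding ext_def by simp
      also have "\<dots> = y j (int (a + nat (d + int \<rho>)) - int b)"
        unfolding wsx_def using n by (simp del: upt_Suc)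
      also have "int (a + nat (d + int \<rho>)) - int b = d + i" using d unfolding i_def by simp
      finally show "ext \<rho> wsx (0 + d) = sh i (y j) (0 + d)" unfolding sh_def by (simp add: add.commute)
    qed
    have "f (ext \<rho> wsx) 0 = f (sh i (y j)) 0"
      using loc ext_fs[OF win kpos] sh_fs[OF yfs] agree by blast
    also have "\<dots> = y (Suc j) i" using ca_at[OF ca yfs] ystep by simp
    finally have fv: "f (ext \<rho> wsx) 0 = y (Suc j) i" .
    have "pe (list_encode (rev wsx)) (f (ext \<rho> wsx) 0) \<in> FSset k \<rho> f"
      unfolding FSset_def using win by blast
    then have mem: "pe (list_encode (rev wsx)) (y (Suc j) i) \<in> FSset k \<rho> f" by (simp only: fv)
    have e1: "V (Ek j a b (Suc (\<rho> + \<rho>))) = list_encode (rev wsx)" by (simp only: VE wsx_def)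
    have e2: "V (Dk (Suc j) (a + \<rho>) b) = y (Suc j) i" by (simp only: VD i_def)
    show ?thesis unfolding Q6_def GV m set_FS prod_encode_inverse fst_conv snd_conv e1 e2
      using mem by simp
  qed
  have q7: "Q7 C m (pe (V (Sk m)) (pe (V (Sk (Suc m))) (V (Dk 0 m 0)))) w" for m
  proof -
    have "V (Sk m) = 0 \<or> V (Sk m) = Suc (pe (V (Dk 0 m 0)) (V (Sk (Suc m))))"
    proof (cases "m < length ws")
      case True
      then have "drop m ws = ws ! m # drop (Suc m) ws" by (rule Cons_nth_drop_Suc[symmetric])
      moreover have "ws ! m = x (int m)" using True unfolding ws by simp
      ultimately show ?thesis unfolding VS VD y0 by simp
    next
      case False then show ?thesis unfolding VS by simp
    qed
    then show ?thesis unfolding Q7_def GV VS w by simp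
  qed
  have q8: "Q8 C m (pe (V (Jk (p1 m) (p1 (p2 m))))
      (pe (V (Dk (V (Jk (p1 m) (p1 (p2 m)))) (p1 (p2 (p2 m))) (p2 (p2 (p2 m)))))
          (V (Dk 0 (p1 (p2 (p2 m))) (p2 (p2 (p2 m)))))))" for m
  proof -
    obtain n r a b where m: "m = pe n (pe r (pe a b))" using pe_surj by metis
    have "a \<le> r \<and> b \<le> r \<longrightarrow> y (Jf n r) (int a - int b) = y 0 (int a - int b)"
      using Jf[of n r] y0 by auto
    then show ?thesis unfolding Q8_def GV m by (simp add: VJ VD Jf)
  qed
  show ?thesis
  proof (intro exI allI)
    fix m
    let ?l = "pe (V m) (pe (V (Dk (p1 m) (p1 (p2 m)) (p2 (p2 m))))
      (pe (pe (V (Dk (p1 m) (p1 (p2 m) + p2 (p2 (p2 m))) (p1 (p2 (p2 m)))))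
      (pe (V (Ek (p1 m) (p1 (p2 m)) (p1 (p2 (p2 m))) (p2 (p2 (p2 m)))))
          (V (Ek (p1 m) (p1 (p2 m)) (p1 (p2 (p2 m))) (Suc (p2 (p2 (p2 m))))))))
      (pe (pe (V (Ek (p1 m) (p1 (p2 m)) (p2 (p2 m)) (Suc (\<rho> + \<rho>))))
      (V (Dk (Suc (p1 m)) (p1 (p2 m) + \<rho>) (p2 (p2 m)))))
      (pe (pe (V (Sk m)) (pe (V (Sk (Suc m))) (V (Dk 0 m 0))))
       (pe (V (Jk (p1 m) (p1 (p2 m))))
      (pe (V (Dk (V (Jk (p1 m) (p1 (p2 m)))) (p1 (p2 (p2 m))) (p2 (p2 (p2 m)))))
          (V (Dk 0 (p1 (p2 (p2 m))) (p2 (p2 (p2 m)))))))))))"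
    have q1: "Q1 C m" unfolding Q1_def GV by simp
    have q2: "Q2 C m (V m)" unfolding Q2_def GV by simp
    show "Rpred k \<rho> (FS k \<rho> f) C m ?l w"
      unfolding Rpred_def using q1 q2 q3 q4 q5 q6 q7 q8 by simp
  qed
qed


theorem lemma3:
  fixes k :: nat and f :: "(int \<Rightarrow> nat) \<Rightarrow> (int \<Rightarrow> nat)"
  assumes "cellular_automaton k f"
  shows "sigma11 (language_code (nonwandering k f))"
proof -
  note ca = assms
  obtain \<rho> where loc: "\<forall>y\<in>full_shift k. \<forall>z\<in>full_shift k. \<forall>i.
       (\<forall>d. \<bar>d\<bar> \<le> int \<rho> \<longrightarrow> y (i + d) = z (i + d)) \<longrightarrow> f y i = f z i"
    using ca_local[OF ca] by blast
  show ?thesis unfolding sigma11_def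
  proof (intro exI conjI allI)
    show "recursive_pred (\<lambda>C m l w. Rpred k \<rho> (FS k \<rho> f) C m l w)" by (rule recursive_Rpred)
    fix w
    show "w \<in> language_code (nonwandering k f) \<longleftrightarrow> (\<exists>C. \<forall>m. \<exists>l. Rpred k \<rho> (FS k \<rho> f) C m l w)"
    proof
      assume "w \<in> language_code (nonwandering k f)"
      then obtain x m0 where "x \<in> nonwandering k f" "w = list_encode (map (\<lambda>i. x (int i)) [0..<m0])"
        unfolding language_code_def language_def by blast
      then show "\<exists>C. \<forall>m. \<exists>l. Rpred k \<rho> (FS k \<rho> f) C m l w"
        using complete[OF ca loc] by blast
    next
      assume "\<exists>C. \<forall>m. \<exists>l. Rpred k \<rho> (FS k \<rho> f) C m l w"
      then obtain C where "\<And>m. \<exists>l. Rpred k \<rho> (FS k \<rho> f) C m l w" by blast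
      from extract_T[OF this] obtain T where T:
        "(\<forall>j a b. T (Dk j a b) = T (Dk j (Suc a) (Suc b)) \<and> T (Dk j a b) < k)"
        "(\<forall>j a b. T (Ek j a b 0) = 0)"
        "(\<forall>j a b t. T (Ek j a b (Suc t)) = Suc (pe (T (Dk j (a + t) b)) (T (Ek j a b t))))"
        "(\<forall>j a b. pe (T (Ek j a b (Suc (\<rho> + \<rho>)))) (T (Dk (Suc j) (a + \<rho>) b)) \<in> set (FS k \<rho> f))"
        "T (Sk 0) = w"
        "(\<forall>i. T (Sk i) = 0 \<or> T (Sk i) = Suc (pe (T (Dk 0 i 0)) (T (Sk (Suc i)))))"
        "(\<forall>n r. n \<le> T (Jk n r) \<and> (\<forall>a b. a \<le> r \<and> b \<le> r \<longrightarrow> T (Dk (T (Jk n r)) a b) = T (Dk 0 a b)))"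
        by blast
      show "w \<in> language_code (nonwandering k f)"
        apply (rule sound_T[where T=T and \<rho>=\<rho>, OF ca loc])
        using T by blast+
    qed
  qed
qed


end
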